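(* Let $(E,d)$ be a metric vector space over $K\in\{\mathbb R,\mathbb C,\mathbb H\}$ such that $d$ is $C_0$-translation invariant for some $C_0\ge0$. Then for all $x,y\in E$ the limit $\delta(x,y)=\lim_{n\to+\infty}\frac1n d(nx,ny)$ exists, and $\delta(x,y)\le d(x,y)+2C_0$.
   Context: A metric vector space is a topological vector space over $K$ whose topology is generated by the metric $d$. $d$ is $C_0$-translation invariant if $d(x+z,y+z)\le d(x,y)+C_0$ for all $x,y,z\in E$. *)

theory Defs
  imports "HOL-Analysis.Analysis"
begin

definition metric_vector_space :: "('a::real_vector \<Rightarrow> 'a \<Rightarrow> real) \<Rightarrow> bool" where
  "metric_vector_space d \<longleftrightarrow>
     Metric_space UNIV d \<and>
     continuous_map (prod_topology (Metric_space.mtopology UNIV d) (Metric_space.mtopology UNIV d))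
        (Metric_space.mtopology UNIV d) (\<lambda>(x, y). x + y) \<and>
     continuous_map (prod_topology euclideanreal (Metric_space.mtopology UNIV d))
        (Metric_space.mtopology UNIV d) (\<lambda>(c, x). c *\<^sub>R x)"

definition translation_invariant_const :: "('a::plus \<Rightarrow> 'a \<Rightarrow> real) \<Rightarrow> real \<Rightarrow> bool" where
  "translation_invariant_const d C0 \<longleftrightarrow> (\<forall>x y z. d (x + z) (y + z) \<le> d x y + C0)"

end

theory Submission
  imports Defs
begin

lemma fekete_aux:
  fixes b :: "nat \<Rightarrow> real"
  assumes sub: "\<And>m n. b (m + n) \<le> b m + b n"
  shows "b (q * k + r) \<le> real q * b k + b r"
proof (induction q)
  case 0 then show ?case by simp
next
  case (Suc q)
  have "b (Suc q * k + r) = b (k + (q * k + r))" by (simp add: add.assoc)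
  also have "\<dots> \<le> b k + b (q * k + r)" by (rule sub)
  also have "\<dots> \<le> real (Suc q) * b k + b r" using Suc by (simp add: algebra_simps)
  finally show ?case .
qed

lemma fekete:
  fixes b :: "nat \<Rightarrow> real"
  assumes nn: "\<And>n. b n \<ge> 0"
    and sub: "\<And>m n. b (m + n) \<le> b m + b n"
  shows "((\<lambda>n. b n / real n) \<longlongrightarrow> Inf {b n / real n | n. n \<ge> 1}) sequentially"
proof -
  define S where "S = {b n / real n | n. n \<ge> 1}"
  define L where "L = Inf S"
  have Sne: "S \<noteq> {}" unfolding S_def by auto
  have Sbdd: "bdd_below S" unfolding S_def bdd_below_def using nn
    by (auto intro!: exI[of _ 0] divide_nonneg_nonneg)
  have low: "L \<le> b n / real n" if "n \<ge> 1" for n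
    unfolding L_def by (rule cInf_lower) (use that Sbdd in \<open>auto simp: S_def\<close>)
  show ?thesis unfolding S_def[symmetric] L_def[symmetric]
  proof (rule LIMSEQ_I)
    fix e :: real assume e: "e > 0"
    have "Inf S < L + e / 2" using e L_def by simp
    then obtain s where "s \<in> S" "s < L + e / 2" using cInf_less_iff[OF Sne Sbdd] by blast
    then obtain k where k: "k \<ge> 1" "b k / real k < L + e / 2" unfolding S_def by auto
    define M where "M = (\<Sum>r<k. b r)"
    have M0: "M \<ge> 0" unfolding M_def using nn by (simp add: sum_nonneg)
    obtain N :: nat where N: "N > 2 * M / e" using reals_Archimedean2 by blast
    show "\<exists>no. \<forall>n\<ge>no. norm (b n / real n - L) < e"
    proof (intro exI[of _ "N + 1"] allI impI)
      fix n assume n: "n \<ge> N + 1"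
      have npos: "real n > 0" using n by simp
      define q where "q = n div k"
      define r where "r = n mod k"
      have nqr: "n = q * k + r" unfolding q_def r_def by simp
      have rk: "r < k" unfolding r_def using k by simp
      have br: "b r \<le> M" unfolding M_def using rk nn
        by (intro member_le_sum) auto
      have qk: "real q * real k \<le> real n"
        using nqr by (metis le_add1 of_nat_le_iff of_nat_mult)
      have bn: "b n \<le> real q * b k + M" using fekete_aux[OF sub, of q k r] nqr br by simp
      have "real q * b k = (real q * real k) * (b k / real k)" using k by simp
      also have "\<dots> \<le> real n * (b k / real k)"
        using qk nn[of k] by (intro mult_right_mono) auto
      finally have "b n \<le> real n * (b k / real k) + M" using bn by simp
      then have "b n / real n \<le> b k / real k + M / real n"
        using npos by (simp add: field_simps)
      moreover have "M / real n < e / 2"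
      proof -
        have "real n > 2 * M / e" using N n by simp
        then have "2 * M < real n * e" using e by (simp add: field_simps)
        then show ?thesis using npos by (simp add: field_simps)
      qed
      moreover have "L \<le> b n / real n" using low n by simp
      ultimately have "b n / real n - L < e" using k(2) by linarith
      moreover have "L \<le> b n / real n" using low n by simp
      ultimately show "norm (b n / real n - L) < e" by simp
    qed
  qed
qed

theorem proposition1:
  fixes d :: "'a::real_vector \<Rightarrow> 'a \<Rightarrow> real" and C0 :: real
  assumes "metric_vector_space d"
    and "C0 \<ge> 0"
    and "translation_invariant_const d C0"
  shows "\<forall>x y. \<exists>L. ((\<lambda>n. d (real n *\<^sub>R x) (real n *\<^sub>R y) / real n) \<longlongrightarrow> L) sequentially
                   \<and> L \<le> d x y + 2 * C0"
proof (intro allI)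
  fix x y :: 'a
  have MS: "Metric_space UNIV d" using assms(1) unfolding metric_vector_space_def by simp
  have nn: "\<And>u v. d u v \<ge> 0" using Metric_space.nonneg[OF MS] by blast
  have tri: "\<And>u v w. d u w \<le> d u v + d v w" using Metric_space.triangle[OF MS] by blast
  have ti: "\<And>u v w. d (u + w) (v + w) \<le> d u v + C0"
    using assms(3) unfolding translation_invariant_const_def by blast
  define b where "b n = d (real n *\<^sub>R x) (real n *\<^sub>R y) + 2 * C0" for n
  have bnn: "b n \<ge> 0" for n unfolding b_def using nn[of "real n *\<^sub>R x" "real n *\<^sub>R y"] assms(2) by simp
  have bsub: "b (m + n) \<le> b m + b n" for m n
  proof -
    have e1: "real (m + n) *\<^sub>R x = real n *\<^sub>R x + real m *\<^sub>R x" by (simp add: scaleR_add_left)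
    have e2: "real m *\<^sub>R x + real n *\<^sub>R y = real n *\<^sub>R y + real m *\<^sub>R x" by (simp add: add.commute)
    have e3: "real (m + n) *\<^sub>R y = real m *\<^sub>R y + real n *\<^sub>R y" by (simp add: scaleR_add_left)
    have "d (real (m + n) *\<^sub>R x) (real (m + n) *\<^sub>R y)
        \<le> d (real (m + n) *\<^sub>R x) (real m *\<^sub>R x + real n *\<^sub>R y) + d (real m *\<^sub>R x + real n *\<^sub>R y) (real (m + n) *\<^sub>R y)"
      by (rule tri)
    also have "d (real (m + n) *\<^sub>R x) (real m *\<^sub>R x + real n *\<^sub>R y) \<le> d (real n *\<^sub>R x) (real n *\<^sub>R y) + C0"
      unfolding e1 e2 by (rule ti)
    also have "d (real m *\<^sub>R x + real n *\<^sub>R y) (real (m + n) *\<^sub>R y) \<le> d (real m *\<^sub>R x) (real m *\<^sub>R y) + C0"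
      unfolding e3 by (rule ti)
    finally show ?thesis unfolding b_def by simp
  qed
  define L where "L = Inf {b n / real n | n. n \<ge> 1}"
  have lim: "((\<lambda>n. b n / real n) \<longlongrightarrow> L) sequentially"
    unfolding L_def by (rule fekete[OF bnn bsub])
  have "((\<lambda>n. b n / real n - 2 * C0 * (1 / real n)) \<longlongrightarrow> L - 2 * C0 * 0) sequentially"
    by (intro tendsto_intros lim lim_const_over_n)
  then have lim2: "((\<lambda>n. b n / real n - 2 * C0 * (1 / real n)) \<longlongrightarrow> L) sequentially" by simp
  have eq: "b n / real n - 2 * C0 * (1 / real n) = d (real n *\<^sub>R x) (real n *\<^sub>R y) / real n" for n
    unfolding b_def by (simp add: field_simps diff_divide_distrib add_divide_distrib)
  have "L \<le> b 1 / real 1"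
    unfolding L_def
  proof (rule cInf_lower)
    show "b 1 / real 1 \<in> {b n / real n | n. n \<ge> 1}" by (intro CollectI exI[of _ 1]) simp
    show "bdd_below {b n / real n | n. n \<ge> 1}"
      by (auto simp: bdd_below_def intro!: exI[of _ 0] divide_nonneg_nonneg bnn)
  qed
  then have "L \<le> d x y + 2 * C0" unfolding b_def by simp
  then show "\<exists>L. ((\<lambda>n. d (real n *\<^sub>R x) (real n *\<^sub>R y) / real n) \<longlongrightarrow> L) sequentially
                   \<and> L \<le> d x y + 2 * C0"
    using lim2 unfolding eq by blast
qed

end
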